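(* In the setting of the context, assume the matrix representing $A$ with respect to the fixed feasible basis has constant row sum $\theta_r$ (i.e. $c_i+a_i+b_i=\theta_r$ for $0\le i\le d$), where $\theta_r$ is an eigenvalue of $A$. Let $s\in\{0,\dots,d\}$ with $s\ne r$. The following are equivalent: (i) in $\Delta$, vertex $r$ is adjacent to vertex $s$ and to no other vertex; (ii) for $0\le i\le d$, $$c_i\theta^*_{i-1}+a_i\theta^*_i+b_i\theta^*_{i+1}-\theta_r\theta^*_i=(\theta_s-\theta_r)(\theta^*_i-a^*_r)$$ (terms with $c_0=0$ or $b_d=0$ vanish), and $A^*$ is not a scalar multiple of $I$.
   Context: Let $\mathbb F$ be a field, $d\ge1$, $V$ an $\mathbb F$-vector space of dimension $d+1$, $\mathcal A=\mathrm{End}(V)$ with identity $I$. Let $E^*_0,\dots,E^*_d\in\mathcal A$ satisfy $E^*_iE^*_j=\delta_{i,j}E^*_i$, $\mathrm{rank}(E^*_i)=1$. Let $A\in\mathcal A$ satisfy $E^*_iAE^*_j=0$ if $|i-j|>1$ and $\neq0$ if $|i-j|=1$. Assume $A$ has $d+1$ distinct eigenvalues $\theta_0,\dots,\theta_d\in\mathbb F$ with primitive idempotents $E_i=\prod_{j\ne i}\frac{A-\theta_jI}{\theta_i-\theta_j}$. Let $\theta^*_i\in\mathbb F$, $A^*=\sum_i\theta^*_iE^*_i$, $a^*_i=\mathrm{tr}(E_iA^* )$. Let $\Delta$ be the graph on $\{0,\dots,d\}$ with $i\sim j$ iff $i\ne j$ and $E_iA^*E_j\ne0$. A basis $v_0,\dots,v_d$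 of $V$ is feasible if $v_i\in E^*_iV$ for all $i$; fix one. Then $Av_i=b_{i-1}v_{i-1}+a_iv_i+c_{i+1}v_{i+1}$ ($v_{-1}=v_{d+1}=0$), with $a_i=\mathrm{tr}(E^*_iA)$, nonzero $b_0,\dots,b_{d-1}$, $c_1,\dots,c_d$, and $b_d=c_0=0$; i.e. the representing matrix has diagonal $a_i$, $(i,i+1)$-entry $b_i$, $(i,i-1)$-entry $c_i$. *)

theory Defs
  imports "Jordan_Normal_Form.DL_Rank" "Jordan_Normal_Form.Char_Poly"
begin

text \<open>Throughout, V = F^(d+1) (column vectors) and End(V) = (d+1) x (d+1) matrices over F.\<close>

definition mat_trace :: "'a::comm_ring_1 mat \<Rightarrow> 'a" where
  "mat_trace M = (\<Sum>i<dim_row M. M $$ (i, i))"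

definition prim_idem :: "nat \<Rightarrow> 'a::field mat \<Rightarrow> (nat \<Rightarrow> 'a) \<Rightarrow> nat \<Rightarrow> 'a mat" where
  "prim_idem d A th i =
     foldr (\<lambda>j M. ((1 / (th i - th j)) \<cdot>\<^sub>m (A - th j \<cdot>\<^sub>m 1\<^sub>m (d+1))) * M)
       (filter (\<lambda>j. j \<noteq> i) [0..<d+1]) (1\<^sub>m (d+1))"

definition dual_mat :: "nat \<Rightarrow> (nat \<Rightarrow> 'a::field mat) \<Rightarrow> (nat \<Rightarrow> 'a) \<Rightarrow> 'a mat" where
  "dual_mat d Es ths = mat (d+1) (d+1) (\<lambda>(k,l). \<Sum>i\<le>d. ths i * Es i $$ (k,l))"

definition coef_a :: "'a::field mat \<Rightarrow> nat \<Rightarrow> 'a" where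
  "coef_a B i = B $$ (i, i)"
definition coef_b :: "nat \<Rightarrow> 'a::field mat \<Rightarrow> nat \<Rightarrow> 'a" where
  "coef_b d B i = (if i < d then B $$ (i, i+1) else 0)"
definition coef_c :: "'a::field mat \<Rightarrow> nat \<Rightarrow> 'a" where
  "coef_c B i = (if 0 < i then B $$ (i, i-1) else 0)"

definition Delta_adj :: "nat \<Rightarrow> 'a::field mat \<Rightarrow> (nat \<Rightarrow> 'a) \<Rightarrow> (nat \<Rightarrow> 'a mat) \<Rightarrow> (nat \<Rightarrow> 'a) \<Rightarrow> nat \<Rightarrow> nat \<Rightarrow> bool" where
  "Delta_adj d A th Es ths i j \<longleftrightarrow>
     i \<noteq> j \<and> prim_idem d A th i * dual_mat d Es ths * prim_idem d A th j \<noteq> 0\<^sub>m (d+1) (d+1)"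

end

theory Submission
  imports Defs
begin


lemma factor_vec:
  fixes A :: "'a::field mat"
  assumes A: "A \<in> carrier_mat n n" and v: "v \<in> carrier_vec n" and Av: "A *\<^sub>v v = a \<cdot>\<^sub>v v"
  shows "(c \<cdot>\<^sub>m (A - b \<cdot>\<^sub>m 1\<^sub>m n)) *\<^sub>v v = (c * (a - b)) \<cdot>\<^sub>v v"
proof (rule eq_vecI)
  fix i assume "i < dim_vec ((c * (a - b)) \<cdot>\<^sub>v v)"
  hence i: "i < n" using v by auto
  have "(A *\<^sub>v v) $ i = a * v $ i" using Av i v by simp
  hence "row A i \<bullet> v = a * v $ i" using A i by simp
  moreover have "row (1\<^sub>m n) i \<bullet> v = v $ i" using i v by simp
  ultimately have h1: "(\<Sum>ia = 0..<n. v $ ia * A $$ (i, ia)) = a * v $ i"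
     and h2: "(\<Sum>ia = 0..<n. v $ ia * (if i = ia then 1 else 0)) = v $ i" using A i v by (auto simp: scalar_prod_def row_def mult.commute)
  have h3: "(\<Sum>ia = 0..<n. c * (v $ ia * A $$ (i, ia))) = c * (a * v $ i)"
    using h1 by (simp add: sum_distrib_left[symmetric])
  have h4: "(\<Sum>ia = 0..<n. b * (c * (v $ ia * (if i = ia then 1 else 0)))) = b * (c * v $ i)"
    using h2 by (simp add: sum_distrib_left[symmetric])
  show "((c \<cdot>\<^sub>m (A - b \<cdot>\<^sub>m 1\<^sub>m n)) *\<^sub>v v) $ i = ((c * (a - b)) \<cdot>\<^sub>v v) $ i"
    using A v i h3 h4 by (simp add: scalar_prod_def sum_distrib_left sum_subtractf algebra_simps row_def)
qed (use A v in auto)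

lemma foldr_prim:
  fixes A :: "'a::field mat"
  assumes A: "A \<in> carrier_mat (Suc d) (Suc d)" and v: "v \<in> carrier_vec (Suc d)"
    and Av: "A *\<^sub>v v = th j \<cdot>\<^sub>v v"
  shows "foldr (\<lambda>k M. ((1 / (th t - th k)) \<cdot>\<^sub>m (A - th k \<cdot>\<^sub>m 1\<^sub>m (d+1))) * M) L (1\<^sub>m (d+1)) \<in> carrier_mat (Suc d) (Suc d)
   \<and> foldr (\<lambda>k M. ((1 / (th t - th k)) \<cdot>\<^sub>m (A - th k \<cdot>\<^sub>m 1\<^sub>m (d+1))) * M) L (1\<^sub>m (d+1)) *\<^sub>v v
     = (\<Prod>k\<leftarrow>L. (th j - th k) / (th t - th k)) \<cdot>\<^sub>v v"
proof (induction L)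
  case Nil
  then show ?case using v by auto
next
  case (Cons k L)
  let ?X = "foldr (\<lambda>k M. ((1 / (th t - th k)) \<cdot>\<^sub>m (A - th k \<cdot>\<^sub>m 1\<^sub>m (d+1))) * M) L (1\<^sub>m (d+1))"
  have X: "?X \<in> carrier_mat (Suc d) (Suc d)" using Cons by simp
  have F: "(1 / (th t - th k)) \<cdot>\<^sub>m (A - th k \<cdot>\<^sub>m 1\<^sub>m (d+1)) \<in> carrier_mat (Suc d) (Suc d)" using A by auto
  have "((1 / (th t - th k)) \<cdot>\<^sub>m (A - th k \<cdot>\<^sub>m 1\<^sub>m (d+1)) * ?X) *\<^sub>v v
     = ((1 / (th t - th k)) \<cdot>\<^sub>m (A - th k \<cdot>\<^sub>m 1\<^sub>m (d+1))) *\<^sub>v (?X *\<^sub>v v)"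
    using F X v by simp
  also have "\<dots> = ((1 / (th t - th k)) \<cdot>\<^sub>m (A - th k \<cdot>\<^sub>m 1\<^sub>m (d+1))) *\<^sub>v ((\<Prod>k\<leftarrow>L. (th j - th k) / (th t - th k)) \<cdot>\<^sub>v v)"
    using Cons by simp
  also have "\<dots> = (\<Prod>k\<leftarrow>L. (th j - th k) / (th t - th k)) \<cdot>\<^sub>v (((1 / (th t - th k)) \<cdot>\<^sub>m (A - th k \<cdot>\<^sub>m 1\<^sub>m (d+1))) *\<^sub>v v)"
    using F v mult_mat_vec by blast
  also have "\<dots> = (\<Prod>k\<leftarrow>k#L. (th j - th k) / (th t - th k)) \<cdot>\<^sub>v v"
    using factor_vec[OF A v Av, of "1 / (th t - th k)" "th k"] by (simp add: smult_smult_assoc mult.commute)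
  finally show ?case using F X by simp
qed

lemma prod_list_one: "(\<And>x. x \<in> set xs \<Longrightarrow> f x = (1::'a::comm_monoid_mult)) \<Longrightarrow> prod_list (map f xs) = 1"
  by (induct xs) auto

lemma smult_vec_zero_iff:
  fixes u :: "'a::field vec"
  assumes "c \<cdot>\<^sub>v u = 0\<^sub>v n" "u \<noteq> 0\<^sub>v n" "u \<in> carrier_vec n"
  shows "c = 0"
proof -
  obtain i where i: "i < n" "u $ i \<noteq> 0" using assms(2,3) by (metis eq_vecI carrier_vecD index_zero_vec(1,2))
  have "(c \<cdot>\<^sub>v u) $ i = 0" using assms(1) i by simp
  thus ?thesis using i assms(3) by simp
qed

lemma prim_idem_carrier:
  fixes A :: "'a::field mat"
  assumes A: "A \<in> carrier_mat (Suc d) (Suc d)"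
  shows "prim_idem d A th t \<in> carrier_mat (Suc d) (Suc d)"
proof -
  have h: "foldr (\<lambda>k M. ((1 / (th t - th k)) \<cdot>\<^sub>m (A - th k \<cdot>\<^sub>m 1\<^sub>m (d+1))) * M) L (1\<^sub>m (d+1)) \<in> carrier_mat (Suc d) (Suc d)" for L
    by (induct L) (use A in auto)
  show ?thesis unfolding prim_idem_def by (rule h)
qed

lemma prim_idem_eigvec:
  fixes A :: "'a::field mat"
  assumes A: "A \<in> carrier_mat (Suc d) (Suc d)" and v: "v \<in> carrier_vec (Suc d)"
    and Av: "A *\<^sub>v v = th j \<cdot>\<^sub>v v" and j: "j \<le> d" and t: "t \<le> d"
    and inj: "inj_on th {0..d}"
  shows "prim_idem d A th t *\<^sub>v v = (if j = t then v else 0\<^sub>v (Suc d))"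
proof -
  let ?L = "filter (\<lambda>k. k \<noteq> t) [0..<d+1]"
  have e: "prim_idem d A th t *\<^sub>v v = (\<Prod>k\<leftarrow>?L. (th j - th k) / (th t - th k)) \<cdot>\<^sub>v v"
    using foldr_prim[of A d v th j t ?L] A v Av unfolding prim_idem_def by simp
  show ?thesis
  proof (cases "j = t")
    case True
    have "(\<Prod>k\<leftarrow>?L. (th j - th k) / (th t - th k)) = 1"
    proof (rule prod_list_one)
      fix k assume "k \<in> set ?L"
      hence "k \<le> d" "k \<noteq> t" by (auto simp del: upt_Suc)
      hence "th t \<noteq> th k" using inj t unfolding inj_on_def by auto
      thus "(th j - th k) / (th t - th k) = 1" using True by simp
    qed
    thus ?thesis using e True by simp
  next
    case False
    have "j \<in> set ?L" using False j by (auto simp del: upt_Suc)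
    hence "0 \<in> set (map (\<lambda>k. (th j - th k) / (th t - th k)) ?L)" by force
    hence z: "(\<Prod>k\<leftarrow>?L. (th j - th k) / (th t - th k)) = 0" by (simp add: prod_list_zero_iff)
    have "prim_idem d A th t *\<^sub>v v = 0 \<cdot>\<^sub>v v" by (simp only: e z)
    thus ?thesis using False v by auto
  qed
qed

lemma eig_decomp:
  fixes A :: "'a::field mat" and u :: "nat \<Rightarrow> 'a vec"
  assumes A: "A \<in> carrier_mat (Suc d) (Suc d)"
    and inj: "inj_on th {0..d}"
    and uc: "\<And>t. t \<le> d \<Longrightarrow> u t \<in> carrier_vec (Suc d)"
    and unz: "\<And>t. t \<le> d \<Longrightarrow> u t \<noteq> 0\<^sub>v (Suc d)"
    and ueig: "\<And>t. t \<le> d \<Longrightarrow> A *\<^sub>v u t = th t \<cdot>\<^sub>v u t"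
  defines "U \<equiv> mat (Suc d) (Suc d) (\<lambda>(i,t). u t $ i)"
  shows "\<exists>V \<in> carrier_mat (Suc d) (Suc d). U * V = 1\<^sub>m (Suc d) \<and> V * U = 1\<^sub>m (Suc d) \<and>
     (\<forall>t\<le>d. \<forall>a<Suc d. \<forall>b<Suc d. prim_idem d A th t $$ (a,b) = u t $ a * V $$ (t,b))"
proof -
  let ?n = "Suc d"
  have Uc: "U \<in> carrier_mat ?n ?n" unfolding U_def by simp
  have Ec: "prim_idem d A th t \<in> carrier_mat ?n ?n" for t using prim_idem_carrier[OF A] .
  have EU: "prim_idem d A th t * U = mat ?n ?n (\<lambda>(a,j). if j = t then u t $ a else 0)" if t: "t \<le> d" for t
  proof (rule eq_matI)
    fix a j assume a: "a < dim_row (mat ?n ?n (\<lambda>(a,j). if j = t then u t $ a else 0))"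
      and j: "j < dim_col (mat ?n ?n (\<lambda>(a,j). if j = t then u t $ a else 0))"
    have "col U j = u j" using j uc[of j] unfolding U_def by (auto intro!: eq_vecI)
    hence "(prim_idem d A th t * U) $$ (a,j) = (prim_idem d A th t *\<^sub>v u j) $ a"
      using a j Ec[of t] Uc by simp
    also have "\<dots> = (if j = t then u t $ a else 0)"
      using prim_idem_eigvec[OF A uc ueig _ t inj, of j] a j by auto
    finally show "(prim_idem d A th t * U) $$ (a,j) = mat ?n ?n (\<lambda>(a,j). if j = t then u t $ a else 0) $$ (a,j)"
      using a j by simp
  qed (use Ec Uc in auto)
  have "det U \<noteq> 0"
  proof
    assume "det U = 0"
    then obtain c where c: "c \<in> carrier_vec ?n" "c \<noteq> 0\<^sub>v ?n" "U *\<^sub>v c = 0\<^sub>v ?n"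
      using det_0_iff_vec_prod_zero_field[OF Uc] by blast
    have "c $ t = 0" if t: "t \<le> d" for t
    proof -
      have z: "prim_idem d A th t *\<^sub>v 0\<^sub>v ?n = 0\<^sub>v ?n"
        using Ec[of t] by (intro eq_vecI) (auto simp: scalar_prod_def)
      have "(prim_idem d A th t * U) *\<^sub>v c = 0\<^sub>v ?n"
        using c Ec[of t] Uc z by simp
      moreover have "(prim_idem d A th t * U) *\<^sub>v c = c $ t \<cdot>\<^sub>v u t"
      proof (rule eq_vecI)
        fix a assume "a < dim_vec (c $ t \<cdot>\<^sub>v u t)"
        hence a: "a < ?n" using uc[OF t] by simp
        have "(mat ?n ?n (\<lambda>(a,j). if j = t then u t $ a else 0) *\<^sub>v c) $ a
            = (\<Sum>j = 0..<?n. (if j = t then u t $ a else 0) * c $ j)"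
          using a c by (simp add: scalar_prod_def row_def)
        also have "\<dots> = (\<Sum>j\<in>{0..<?n}. if j = t then u t $ a * c $ t else 0)" by (rule sum.cong) auto
        also have "\<dots> = u t $ a * c $ t" using t by (subst sum.delta) auto
        finally show "((prim_idem d A th t * U) *\<^sub>v c) $ a = (c $ t \<cdot>\<^sub>v u t) $ a"
          using EU[OF t] a uc[OF t] by (simp add: mult.commute)
      qed (use EU[OF t] uc[OF t] in auto)
      ultimately have "c $ t \<cdot>\<^sub>v u t = 0\<^sub>v ?n" by simp
      thus ?thesis using unz[OF t] uc[OF t] smult_vec_zero_iff by blast
    qed
    hence "c = 0\<^sub>v ?n" using c by (intro eq_vecI) auto
    thus False using c by simp
  qed
  from det_non_zero_imp_unit[OF Uc this, of "()"]
  obtain V where V: "V \<in> carrier_mat ?n ?n" "V * U = 1\<^sub>m ?n" "U * V = 1\<^sub>m ?n"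
    unfolding Units_def ring_mat_simps by auto
  have "prim_idem d A th t $$ (a,b) = u t $ a * V $$ (t,b)" if t: "t \<le> d" and a: "a < ?n" and b: "b < ?n" for t a b
  proof -
    have "prim_idem d A th t = prim_idem d A th t * (U * V)" using V Ec[of t] by simp
    also have "\<dots> = (prim_idem d A th t * U) * V" using V Ec[of t] Uc by simp
    finally have "prim_idem d A th t $$ (a,b) = (mat ?n ?n (\<lambda>(a,j). if j = t then u t $ a else 0) * V) $$ (a,b)"
      using EU[OF t] by simp
    also have "\<dots> = (\<Sum>j = 0..<?n. (if j = t then u t $ a else 0) * V $$ (j,b))"
      using a b V by (simp add: scalar_prod_def row_def)
    also have "\<dots> = (\<Sum>j\<in>{0..<?n}. if j = t then u t $ a * V $$ (t,b) else 0)" by (rule sum.cong) auto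
    also have "\<dots> = u t $ a * V $$ (t,b)" using t by (subst sum.delta) auto
    finally show ?thesis .
  qed
  thus ?thesis using V by blast
qed


lemma eig_formula:
  fixes A :: "'a::field mat" and u :: "nat \<Rightarrow> 'a vec"
  assumes A: "A \<in> carrier_mat (Suc d) (Suc d)"
    and inj: "inj_on th {0..d}"
    and uc: "\<And>t. t \<le> d \<Longrightarrow> u t \<in> carrier_vec (Suc d)"
    and ueig: "\<And>t. t \<le> d \<Longrightarrow> A *\<^sub>v u t = th t \<cdot>\<^sub>v u t"
    and V: "V \<in> carrier_mat (Suc d) (Suc d)"
    and UV: "mat (Suc d) (Suc d) (\<lambda>(i,t). u t $ i) * V = 1\<^sub>m (Suc d)"
    and t: "t \<le> d" and a: "a < Suc d" and b: "b < Suc d"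
  shows "prim_idem d A th t $$ (a,b) = u t $ a * V $$ (t,b)"
proof -
  let ?n = "Suc d"
  define U where "U = mat (Suc d) (Suc d) (\<lambda>(i,t). u t $ i)"
  have Uc: "U \<in> carrier_mat ?n ?n" unfolding U_def by simp
  have Ec: "prim_idem d A th t \<in> carrier_mat ?n ?n" using prim_idem_carrier[OF A] .
  have EU: "prim_idem d A th t * U = mat ?n ?n (\<lambda>(a,j). if j = t then u t $ a else 0)"
  proof (rule eq_matI)
    fix a j assume a: "a < dim_row (mat ?n ?n (\<lambda>(a,j). if j = t then u t $ a else 0))"
      and j: "j < dim_col (mat ?n ?n (\<lambda>(a,j). if j = t then u t $ a else 0))"
    have "col U j = u j" using j uc[of j] unfolding U_def by (auto intro!: eq_vecI)
    hence "(prim_idem d A th t * U) $$ (a,j) = (prim_idem d A th t *\<^sub>v u j) $ a"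
      using a j Ec Uc by simp
    also have "\<dots> = (if j = t then u t $ a else 0)"
      using prim_idem_eigvec[OF A uc ueig _ t inj, of j] a j by auto
    finally show "(prim_idem d A th t * U) $$ (a,j) = mat ?n ?n (\<lambda>(a,j). if j = t then u t $ a else 0) $$ (a,j)"
      using a j by simp
  qed (use Ec Uc in auto)
  have "prim_idem d A th t = prim_idem d A th t * (U * V)" using V Ec UV unfolding U_def by simp
  also have "\<dots> = (prim_idem d A th t * U) * V" using V Ec Uc by simp
  finally have "prim_idem d A th t $$ (a,b) = (mat ?n ?n (\<lambda>(a,j). if j = t then u t $ a else 0) * V) $$ (a,b)"
    using EU by simp
  also have "\<dots> = (\<Sum>j = 0..<?n. (if j = t then u t $ a else 0) * V $$ (j,b))"
    using a b V by (simp add: scalar_prod_def row_def)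
  also have "\<dots> = (\<Sum>j\<in>{0..<?n}. if j = t then u t $ a * V $$ (t,b) else 0)" by (rule sum.cong) auto
  also have "\<dots> = u t $ a * V $$ (t,b)" using t by (subst sum.delta) auto
  finally show ?thesis .
qed



context
  fixes n :: nat and Bm U V :: "nat \<Rightarrow> nat \<Rightarrow> 'a::field" and K ths th :: "nat \<Rightarrow> 'a" and r :: nat
  assumes UV: "\<And>i j. i < n \<Longrightarrow> j < n \<Longrightarrow> (\<Sum>k=0..<n. U i k * V k j) = (if i = j then 1 else 0)"
    and VU: "\<And>i j. i < n \<Longrightarrow> j < n \<Longrightarrow> (\<Sum>k=0..<n. V i k * U k j) = (if i = j then 1 else 0)"
    and eig: "\<And>k a. k < n \<Longrightarrow> a < n \<Longrightarrow> (\<Sum>m=0..<n. Bm k m * U m a) = th a * U k a"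
    and Ur: "\<And>k. k < n \<Longrightarrow> U k r = 1"
    and rn: "r < n"
    and Ksym: "\<And>i j. i < n \<Longrightarrow> j < n \<Longrightarrow> Bm j i * K j = K i * Bm i j"
    and Knz: "\<And>i. i < n \<Longrightarrow> K i \<noteq> 0"
    and thinj: "inj_on th {0..<n}"
begin

definition MM :: "nat \<Rightarrow> nat \<Rightarrow> 'a" where
  "MM t j = (\<Sum>k=0..<n. V t k * ths k * U k j)"

lemma C1: assumes i: "i < n" shows "(\<Sum>t=0..<n. U i t * MM t r) = ths i"
proof -
  have "(\<Sum>t=0..<n. U i t * MM t r) = (\<Sum>t=0..<n. \<Sum>k=0..<n. U i t * V t k * (ths k * U k r))"
    unfolding MM_def by (simp add: sum_distrib_left mult.assoc)
  also have "\<dots> = (\<Sum>k=0..<n. \<Sum>t=0..<n. U i t * V t k * (ths k * U k r))" by (rule sum.swap)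
  also have "\<dots> = (\<Sum>k=0..<n. (\<Sum>t=0..<n. U i t * V t k) * (ths k * U k r))" by (simp add: sum_distrib_right)
  also have "\<dots> = (\<Sum>k=0..<n. if k = i then ths i else 0)"
    by (rule sum.cong) (use UV i Ur in auto)
  also have "\<dots> = ths i" using i by simp
  finally show ?thesis .
qed

lemma Uinj: assumes "\<And>i. i < n \<Longrightarrow> (\<Sum>t=0..<n. U i t * g t) = 0" and j: "j < n" shows "g j = 0"
proof -
  have "0 = (\<Sum>i=0..<n. V j i * (\<Sum>t=0..<n. U i t * g t))" using assms by simp
  also have "\<dots> = (\<Sum>i=0..<n. \<Sum>t=0..<n. V j i * U i t * g t)" by (simp add: sum_distrib_left mult.assoc)
  also have "\<dots> = (\<Sum>t=0..<n. \<Sum>i=0..<n. V j i * U i t * g t)" by (rule sum.swap)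
  also have "\<dots> = (\<Sum>t=0..<n. (\<Sum>i=0..<n. V j i * U i t) * g t)" by (simp add: sum_distrib_right)
  also have "\<dots> = (\<Sum>t=0..<n. if t = j then g j else 0)" by (rule sum.cong) (use VU j in auto)
  also have "\<dots> = g j" using j by simp
  finally show ?thesis by simp
qed

lemma C2: assumes s: "s < n"
  shows "(\<forall>i<n. (\<Sum>j=0..<n. Bm i j * ths j) - th r * ths i = (th s - th r) * (ths i - MM r r))
     \<longleftrightarrow> (\<forall>t<n. t \<noteq> r \<longrightarrow> t \<noteq> s \<longrightarrow> MM t r = 0)"
proof -
  define g where "g t = (th t - th r) * MM t r - (th s - th r) * (MM t r - (if t = r then MM r r else 0))" for t
  have key: "(\<Sum>j=0..<n. Bm i j * ths j) - th r * ths i - (th s - th r) * (ths i - MM r r)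
      = (\<Sum>t=0..<n. U i t * g t)" if i: "i < n" for i
  proof -
    have e1: "(\<Sum>j=0..<n. Bm i j * ths j) = (\<Sum>t=0..<n. th t * U i t * MM t r)"
    proof -
      have "(\<Sum>j=0..<n. Bm i j * ths j) = (\<Sum>j=0..<n. Bm i j * (\<Sum>t=0..<n. U j t * MM t r))"
        by (rule sum.cong) (use C1 in auto)
      also have "\<dots> = (\<Sum>j=0..<n. \<Sum>t=0..<n. Bm i j * U j t * MM t r)" by (simp add: sum_distrib_left mult.assoc)
      also have "\<dots> = (\<Sum>t=0..<n. \<Sum>j=0..<n. Bm i j * U j t * MM t r)" by (rule sum.swap)
      also have "\<dots> = (\<Sum>t=0..<n. (\<Sum>j=0..<n. Bm i j * U j t) * MM t r)" by (simp add: sum_distrib_right)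
      also have "\<dots> = (\<Sum>t=0..<n. th t * U i t * MM t r)" by (rule sum.cong) (use eig i in auto)
      finally show ?thesis .
    qed
    have e2: "ths i = (\<Sum>t=0..<n. U i t * MM t r)" using C1 i by simp
    have e3: "MM r r = (\<Sum>t=0..<n. U i t * (if t = r then MM r r else 0))"
      using Ur i rn by (simp add: if_distrib cong: if_cong)
    have pw: "U i t * g t = th t * U i t * MM t r - th r * (U i t * MM t r) - (th s - th r) * (U i t * MM t r - U i t * (if t = r then MM r r else 0))" for t
      by (simp add: g_def algebra_simps)
    have "(\<Sum>t=0..<n. U i t * g t) = (\<Sum>t=0..<n. th t * U i t * MM t r - th r * (U i t * MM t r) - (th s - th r) * (U i t * MM t r - U i t * (if t = r then MM r r else 0)))"
      by (rule sum.cong) (simp_all only: pw)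
    also have "\<dots> = (\<Sum>t=0..<n. th t * U i t * MM t r) - th r * (\<Sum>t=0..<n. U i t * MM t r) - (th s - th r) * ((\<Sum>t=0..<n. U i t * MM t r) - (\<Sum>t=0..<n. U i t * (if t = r then MM r r else 0)))"
      by (simp only: sum_subtractf sum_distrib_left[symmetric])
    finally show ?thesis using e1 e2 e3 by simp
  qed
  have gz: "g t = 0 \<longleftrightarrow> (t \<noteq> r \<longrightarrow> t \<noteq> s \<longrightarrow> MM t r = 0)" if t: "t < n" for t
  proof (cases "t = r")
    case True thus ?thesis by (simp add: g_def)
  next
    case False
    have "g t = (th t - th s) * MM t r" using False by (simp add: g_def algebra_simps)
    moreover have "t \<noteq> s \<Longrightarrow> th t \<noteq> th s" using thinj t s unfolding inj_on_def by auto
    ultimately show ?thesis using False by auto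
  qed
  show ?thesis
  proof
    assume h: "\<forall>i<n. (\<Sum>j=0..<n. Bm i j * ths j) - th r * ths i = (th s - th r) * (ths i - MM r r)"
    have "g t = 0" if "t < n" for t
      by (rule Uinj[OF _ that]) (use key h in auto)
    thus "\<forall>t<n. t \<noteq> r \<longrightarrow> t \<noteq> s \<longrightarrow> MM t r = 0" using gz by auto
  next
    assume h: "\<forall>t<n. t \<noteq> r \<longrightarrow> t \<noteq> s \<longrightarrow> MM t r = 0"
    have "g t = 0" if "t < n" for t using gz h that by auto
    hence z: "(\<Sum>t=0..<n. U i t * g t) = 0" for i by simp
    show "\<forall>i<n. (\<Sum>j=0..<n. Bm i j * ths j) - th r * ths i = (th s - th r) * (ths i - MM r r)"
    proof (intro allI impI)
      fix i assume i: "i < n"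
      have "(\<Sum>j=0..<n. Bm i j * ths j) - th r * ths i - (th s - th r) * (ths i - MM r r) = 0"
        using key[OF i] z[of i] by simp
      thus "(\<Sum>j=0..<n. Bm i j * ths j) - th r * ths i = (th s - th r) * (ths i - MM r r)"
        by (simp only: right_minus_eq)
    qed
  qed
qed

definition WW :: "nat \<Rightarrow> nat \<Rightarrow> 'a" where
  "WW a b = (\<Sum>k=0..<n. U k a * K k * U k b)"

lemma W_off: assumes a: "a < n" and b: "b < n" and ab: "a \<noteq> b" shows "WW a b = 0"
proof -
  have "th a * WW a b = (\<Sum>k=0..<n. (\<Sum>m=0..<n. Bm k m * U m a) * K k * U k b)"
    unfolding WW_def sum_distrib_left by (rule sum.cong) (use eig a in auto)
  also have "\<dots> = (\<Sum>k=0..<n. \<Sum>m=0..<n. U m a * (Bm k m * K k) * U k b)"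
    by (intro sum.cong refl) (simp add: sum_distrib_left sum_distrib_right mult_ac)
  also have "\<dots> = (\<Sum>m=0..<n. \<Sum>k=0..<n. U m a * (Bm k m * K k) * U k b)" by (rule sum.swap)
  also have "\<dots> = (\<Sum>m=0..<n. \<Sum>k=0..<n. U m a * K m * (Bm m k * U k b))"
    by (intro sum.cong refl) (use Ksym in \<open>auto simp: algebra_simps\<close>)
  also have "\<dots> = (\<Sum>m=0..<n. U m a * K m * (\<Sum>k=0..<n. Bm m k * U k b))"
    by (simp add: sum_distrib_left)
  also have "\<dots> = (\<Sum>m=0..<n. U m a * K m * (th b * U m b))"
    by (rule sum.cong) (use eig b in auto)
  also have "\<dots> = th b * WW a b" unfolding WW_def sum_distrib_left by (simp add: algebra_simps)
  finally have "(th a - th b) * WW a b = 0" by (simp add: algebra_simps)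
  moreover have "th a \<noteq> th b" using thinj a b ab unfolding inj_on_def by auto
  ultimately show ?thesis by simp
qed

lemma W_diag: assumes a: "a < n" shows "WW a a \<noteq> 0"
proof
  assume z: "WW a a = 0"
  have row0: "(\<Sum>k=0..<n. (U k a * K k) * U k c) = 0" if c: "c < n" for c
    using W_off[OF a c] z unfolding WW_def by (cases "a = c") (auto simp: mult.assoc)
  have x0: "U j a * K j = 0" if j: "j < n" for j
  proof -
    have "0 = (\<Sum>c=0..<n. (\<Sum>k=0..<n. (U k a * K k) * U k c) * V c j)" using row0 by simp
    also have "\<dots> = (\<Sum>c=0..<n. \<Sum>k=0..<n. (U k a * K k) * (U k c * V c j))"
      by (simp add: sum_distrib_right mult.assoc)
    also have "\<dots> = (\<Sum>k=0..<n. \<Sum>c=0..<n. (U k a * K k) * (U k c * V c j))" by (rule sum.swap)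
    also have "\<dots> = (\<Sum>k=0..<n. (U k a * K k) * (\<Sum>c=0..<n. U k c * V c j))" by (simp add: sum_distrib_left)
    also have "\<dots> = (\<Sum>k=0..<n. if k = j then U j a * K j else 0)" by (rule sum.cong) (use UV j in auto)
    also have "\<dots> = U j a * K j" using j by simp
    finally show ?thesis by simp
  qed
  have "(\<Sum>k=0..<n. V a k * U k a) = 0" by (rule sum.neutral) (use x0 Knz in auto)
  thus False using VU[OF a a] by simp
qed

lemma W_M: assumes a: "a < n" and b: "b < n"
  shows "WW a a * MM a b = (\<Sum>k=0..<n. U k a * K k * ths k * U k b)"
proof -
  have "WW a a * MM a b = (\<Sum>c=0..<n. WW a c * MM c b)"
  proof -
    have "(\<Sum>c=0..<n. WW a c * MM c b) = (\<Sum>c=0..<n. if c = a then WW a a * MM a b else 0)"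
      by (rule sum.cong) (use W_off a in auto)
    thus ?thesis using a by simp
  qed
  also have "\<dots> = (\<Sum>c=0..<n. \<Sum>k=0..<n. \<Sum>l=0..<n. (U k a * K k) * (U k c * V c l) * (ths l * U l b))"
    unfolding WW_def MM_def sum_product by (intro sum.cong refl) (simp add: mult_ac)
  also have "\<dots> = (\<Sum>k=0..<n. \<Sum>c=0..<n. \<Sum>l=0..<n. (U k a * K k) * (U k c * V c l) * (ths l * U l b))"
    by (rule sum.swap)
  also have "\<dots> = (\<Sum>k=0..<n. \<Sum>l=0..<n. \<Sum>c=0..<n. (U k a * K k) * (U k c * V c l) * (ths l * U l b))"
    by (intro sum.cong refl sum.swap)
  also have "\<dots> = (\<Sum>k=0..<n. \<Sum>l=0..<n. (U k a * K k) * (\<Sum>c=0..<n. U k c * V c l) * (ths l * U l b))"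
    by (simp add: sum_distrib_left sum_distrib_right)
  also have "\<dots> = (\<Sum>k=0..<n. \<Sum>l=0..<n. if l = k then (U k a * K k) * (ths k * U k b) else 0)"
    by (intro sum.cong refl) (use UV in auto)
  also have "\<dots> = (\<Sum>k=0..<n. U k a * K k * ths k * U k b)"
    by (intro sum.cong refl) (auto simp: mult.assoc)
  finally show ?thesis .
qed

lemma C3: assumes a: "a < n" and b: "b < n" shows "MM a b = 0 \<longleftrightarrow> MM b a = 0"
proof -
  have "WW a a * MM a b = WW b b * MM b a"
    unfolding W_M[OF a b] W_M[OF b a] by (rule sum.cong) (auto simp: algebra_simps)
  thus ?thesis using W_diag[OF a] W_diag[OF b] by auto
qed

lemma C4: assumes "\<And>i. i < n \<Longrightarrow> ths i = c" and a: "a < n" and b: "b < n"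
  shows "MM a b = (if a = b then c else 0)"
proof -
  have "MM a b = c * (\<Sum>k=0..<n. V a k * U k b)" unfolding MM_def sum_distrib_left
    by (rule sum.cong) (use assms in auto)
  thus ?thesis using VU[OF a b] by simp
qed

lemma C5: assumes "\<forall>t<n. t \<noteq> r \<longrightarrow> MM t r = 0" and i: "i < n"
  shows "ths i = MM r r"
proof -
  have "ths i = (\<Sum>t=0..<n. U i t * MM t r)" using C1 i by simp
  also have "\<dots> = (\<Sum>t=0..<n. if t = r then MM r r else 0)" by (rule sum.cong) (use assms Ur i in auto)
  also have "\<dots> = MM r r" using rn by simp
  finally show ?thesis .
qed

end


lemma mat_nz_iff:
  assumes "X \<in> carrier_mat n m"
  shows "X \<noteq> 0\<^sub>m n m \<longleftrightarrow> (\<exists>k<n. \<exists>l<m. X $$ (k,l) \<noteq> 0)"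
proof
  assume "X \<noteq> 0\<^sub>m n m"
  thus "\<exists>k<n. \<exists>l<m. X $$ (k,l) \<noteq> 0" using assms by (auto intro!: eq_matI)
next
  assume "\<exists>k<n. \<exists>l<m. X $$ (k,l) \<noteq> 0"
  thus "X \<noteq> 0\<^sub>m n m" by auto
qed

lemma mid_prod:
  fixes R Z C :: "'a::comm_ring_1 mat"
  assumes R: "R \<in> carrier_mat n n" and Z: "Z \<in> carrier_mat n n" and C: "C \<in> carrier_mat n n"
    and i: "i < n" and j: "j < n"
  shows "(R * Z * C) $$ (i,j) = (\<Sum>a=0..<n. \<Sum>b=0..<n. R $$ (i,a) * Z $$ (a,b) * C $$ (b,j))"
proof -
  have "(R * Z * C) $$ (i,j) = (\<Sum>b=0..<n. (\<Sum>a=0..<n. R $$ (i,a) * Z $$ (a,b)) * C $$ (b,j))"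
    using R Z C i j by (simp add: scalar_prod_def row_def col_def del: assoc_mult_mat)
  also have "\<dots> = (\<Sum>b=0..<n. \<Sum>a=0..<n. R $$ (i,a) * Z $$ (a,b) * C $$ (b,j))" by (simp add: sum_distrib_right)
  also have "\<dots> = (\<Sum>a=0..<n. \<Sum>b=0..<n. R $$ (i,a) * Z $$ (a,b) * C $$ (b,j))" by (rule sum.swap)
  finally show ?thesis .
qed

lemma rank1_mid:
  fixes X Z Y :: "'a::comm_ring_1 mat"
  assumes X: "X \<in> carrier_mat n n" and Z: "Z \<in> carrier_mat n n" and Y: "Y \<in> carrier_mat n n"
    and Xe: "\<And>k a. k < n \<Longrightarrow> a < n \<Longrightarrow> X $$ (k,a) = x k * y a"
    and Ye: "\<And>b l. b < n \<Longrightarrow> l < n \<Longrightarrow> Y $$ (b,l) = z b * w l"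
    and k: "k < n" and l: "l < n"
  shows "(X * Z * Y) $$ (k,l) = x k * (\<Sum>a=0..<n. \<Sum>b=0..<n. y a * Z $$ (a,b) * z b) * w l"
proof -
  have "(X * Z * Y) $$ (k,l) = (\<Sum>a=0..<n. \<Sum>b=0..<n. X $$ (k,a) * Z $$ (a,b) * Y $$ (b,l))"
    by (rule mid_prod[OF X Z Y k l])
  also have "\<dots> = (\<Sum>a=0..<n. \<Sum>b=0..<n. x k * (y a * Z $$ (a,b) * z b) * w l)"
    by (intro sum.cong refl) (simp add: Xe Ye k l mult_ac)
  also have "\<dots> = x k * (\<Sum>a=0..<n. \<Sum>b=0..<n. y a * Z $$ (a,b) * z b) * w l"
    by (simp add: sum_distrib_left sum_distrib_right)
  finally show ?thesis .
qed

lemma trace_rank1: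
  fixes X Z :: "'a::comm_ring_1 mat"
  assumes X: "X \<in> carrier_mat n n" and Z: "Z \<in> carrier_mat n n"
    and Xe: "\<And>k a. k < n \<Longrightarrow> a < n \<Longrightarrow> X $$ (k,a) = x k * y a"
  shows "mat_trace (X * Z) = (\<Sum>a=0..<n. \<Sum>b=0..<n. y a * Z $$ (a,b) * x b)"
proof -
  have "mat_trace (X * Z) = (\<Sum>k=0..<n. \<Sum>a=0..<n. X $$ (k,a) * Z $$ (a,k))"
    unfolding mat_trace_def using X Z by (simp add: scalar_prod_def row_def col_def atLeast0LessThan)
  also have "\<dots> = (\<Sum>k=0..<n. \<Sum>a=0..<n. y a * Z $$ (a,k) * x k)"
    by (intro sum.cong refl) (simp add: Xe mult_ac)
  also have "\<dots> = (\<Sum>a=0..<n. \<Sum>k=0..<n. y a * Z $$ (a,k) * x k)" by (rule sum.swap)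
  finally show ?thesis .
qed

lemma nz_rank1:
  fixes R C :: "'a::field mat"
  assumes R: "R \<in> carrier_mat n n" and C: "C \<in> carrier_mat n n" and RC: "R * C = 1\<^sub>m n"
    and i: "i < n" and j: "j < n"
  shows "(\<exists>k<n. \<exists>l<n. C $$ (k,i) * c * R $$ (j,l) \<noteq> 0) \<longleftrightarrow> c \<noteq> 0"
proof
  assume "\<exists>k<n. \<exists>l<n. C $$ (k,i) * c * R $$ (j,l) \<noteq> 0"
  thus "c \<noteq> 0" by auto
next
  assume c: "c \<noteq> 0"
  have "\<exists>k<n. C $$ (k,i) \<noteq> 0"
  proof (rule ccontr)
    assume "\<not> ?thesis"
    hence "(R * C) $$ (i,i) = 0" using R C i by (simp add: scalar_prod_def)
    thus False using RC i by simp
  qed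
  moreover have "\<exists>l<n. R $$ (j,l) \<noteq> 0"
  proof (rule ccontr)
    assume "\<not> ?thesis"
    hence "(R * C) $$ (j,j) = 0" using R C j by (simp add: scalar_prod_def)
    thus False using RC j by simp
  qed
  ultimately show "\<exists>k<n. \<exists>l<n. C $$ (k,i) * c * R $$ (j,l) \<noteq> 0" using c by auto
qed

lemma row_expand:
  fixes B :: "'a::field mat"
  assumes tri: "\<And>i j. i \<le> d \<Longrightarrow> j \<le> d \<Longrightarrow> j > i + 1 \<or> i > j + 1 \<Longrightarrow> B $$ (i,j) = 0"
    and i: "i \<le> d"
  shows "(\<Sum>j=0..<Suc d. B $$ (i,j) * f j) = coef_c B i * f (i - 1) + coef_a B i * f i + coef_b d B i * f (i + 1)"
proof -
  have pw: "B $$ (i,j) * f j = (if 0 < i \<and> j = i - 1 then B $$ (i,j) * f j else 0)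
      + (if j = i then B $$ (i,j) * f j else 0) + (if i < d \<and> j = i + 1 then B $$ (i,j) * f j else 0)"
    if j: "j \<in> {0..<Suc d}" for j
  proof (cases "j > i + 1 \<or> i > j + 1")
    case h: True
    hence z: "B $$ (i,j) = 0" using tri[of i j] i j by auto
    have c1: "(0 < i \<and> j = i - 1) = False" and c2: "(j = i) = False" and c3: "(i < d \<and> j = i + 1) = False"
      using h by auto
    show ?thesis by (simp only: c1 c2 c3 if_False z) simp
  next
    case False
    hence "(0 < i \<and> j = i - 1) \<or> j = i \<or> (i < d \<and> j = i + 1)" using j i by (simp, arith)
    thus ?thesis by auto
  qed
  have "(\<Sum>j=0..<Suc d. B $$ (i,j) * f j) = (\<Sum>j=0..<Suc d. (if 0 < i \<and> j = i - 1 then B $$ (i,j) * f j else 0))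
      + (\<Sum>j=0..<Suc d. (if j = i then B $$ (i,j) * f j else 0)) + (\<Sum>j=0..<Suc d. (if i < d \<and> j = i + 1 then B $$ (i,j) * f j else 0))"
    by (simp only: sum.cong[OF refl pw] sum.distrib)
  also have "\<dots> = coef_c B i * f (i - 1) + coef_a B i * f i + coef_b d B i * f (i + 1)"
  proof -
    have 1: "(\<Sum>j=0..<Suc d. (if 0 < i \<and> j = i - 1 then B $$ (i,j) * f j else 0)) = coef_c B i * f (i - 1)"
    proof (cases "0 < i")
      case True
      have "(\<Sum>j=0..<Suc d. (if 0 < i \<and> j = i - 1 then B $$ (i,j) * f j else 0))
           = (\<Sum>j\<in>{0..<Suc d}. (if j = i - 1 then B $$ (i,j) * f j else 0))" using True by simp
      also have "\<dots> = B $$ (i, i-1) * f (i-1)" using i by (subst sum.delta) auto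
      finally show ?thesis using True by (simp add: coef_c_def)
    qed (simp add: coef_c_def)
    have 2: "(\<Sum>j=0..<Suc d. (if j = i then B $$ (i,j) * f j else 0)) = coef_a B i * f i"
      using i by (subst sum.delta) (auto simp: coef_a_def)
    have 3: "(\<Sum>j=0..<Suc d. (if i < d \<and> j = i + 1 then B $$ (i,j) * f j else 0)) = coef_b d B i * f (i + 1)"
    proof (cases "i < d")
      case True
      have "(\<Sum>j=0..<Suc d. (if i < d \<and> j = i + 1 then B $$ (i,j) * f j else 0))
           = (\<Sum>j\<in>{0..<Suc d}. (if j = i + 1 then B $$ (i,j) * f j else 0))" using True by simp
      also have "\<dots> = B $$ (i, i+1) * f (i+1)" using True by (subst sum.delta) auto
      finally show ?thesis using True by (simp add: coef_b_def)
    qed (simp add: coef_b_def)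
    show ?thesis using 1 2 3 by simp
  qed
  finally show ?thesis .
qed



lemma one_entries:
  fixes X Y :: "'a::comm_ring_1 mat"
  assumes X: "X \<in> carrier_mat n n" and Y: "Y \<in> carrier_mat n n" and XY: "X * Y = 1\<^sub>m n"
    and i: "i < n" and j: "j < n"
  shows "(\<Sum>k=0..<n. X $$ (i,k) * Y $$ (k,j)) = (if i = j then 1 else 0)"
proof -
  have "(X * Y) $$ (i,j) = (\<Sum>k=0..<n. X $$ (i,k) * Y $$ (k,j))"
    using X Y i j by (simp add: scalar_prod_def row_def col_def)
  thus ?thesis using XY i j by simp
qed

lemma get_inverse:
  fixes P :: "'a::comm_ring_1 mat"
  assumes "P \<in> carrier_mat n n" "invertible_mat P"
  shows "\<exists>Q. Q \<in> carrier_mat n n \<and> P * Q = 1\<^sub>m n \<and> Q * P = 1\<^sub>m n"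
proof -
  obtain Q where Q: "P * Q = 1\<^sub>m (dim_row P)" "Q * P = 1\<^sub>m (dim_row Q)"
    using assms(2) unfolding invertible_mat_def inverts_mat_def by blast
  have "dim_col (Q * P) = dim_row Q" using Q(2) by simp
  hence r: "dim_row Q = n" using assms(1) by simp
  have "dim_col (P * Q) = dim_row P" using Q(1) by simp
  hence c: "dim_col Q = n" using assms(1) by simp
  show ?thesis using Q r c assms(1) by (intro exI[of _ Q]) auto
qed

lemma assoc4:
  fixes A B C D :: "'a::semiring_0 mat"
  assumes "A \<in> carrier_mat n n" "B \<in> carrier_mat n n" "C \<in> carrier_mat n n" "D \<in> carrier_mat n n"
  shows "A * B * (C * D) = A * (B * C) * D"
proof -
  have "A * B * (C * D) = A * (B * (C * D))" using assms by (intro assoc_mult_mat) auto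
  also have "B * (C * D) = (B * C) * D" using assms by (intro assoc_mult_mat[symmetric]) auto
  also have "A * ((B * C) * D) = A * (B * C) * D" using assms by (intro assoc_mult_mat[symmetric]) auto
  finally show ?thesis .
qed

lemma sandwich:
  fixes A B X C D :: "'a::semiring_0 mat"
  assumes "A \<in> carrier_mat n n" "B \<in> carrier_mat n n" "X \<in> carrier_mat n n" "C \<in> carrier_mat n n" "D \<in> carrier_mat n n"
  shows "A * B * X * (C * D) = A * (B * X * C) * D"
proof -
  have ABX: "A * B * X \<in> carrier_mat n n" and BX: "B * X \<in> carrier_mat n n" using assms by auto
  have e1: "A * B * X * (C * D) = A * B * X * C * D" using assoc_mult_mat[OF ABX assms(4,5)] by simp
  have e2: "A * B * X = A * (B * X)" using assoc_mult_mat[OF assms(1,2,3)] .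
  have e3: "A * (B * X) * C = A * (B * X * C)" using assoc_mult_mat[OF assms(1) BX assms(4)] .
  show ?thesis by (subst e1, subst e2, subst e3, rule refl)
qed



theorem proposition8p2:
  fixes d :: nat
    and Es :: "nat \<Rightarrow> 'a::field mat"
    and A :: "'a mat"
    and th ths :: "nat \<Rightarrow> 'a"
    and P B :: "'a mat"
    and r s :: nat
  assumes d1: "d \<ge> 1"
    and Es_carrier: "\<And>i. i \<le> d \<Longrightarrow> Es i \<in> carrier_mat (d+1) (d+1)"
    and Es_orth: "\<And>i j. i \<le> d \<Longrightarrow> j \<le> d \<Longrightarrow> Es i * Es j = (if i = j then Es i else 0\<^sub>m (d+1) (d+1))"
    and Es_rank: "\<And>i. i \<le> d \<Longrightarrow> vec_space.rank (d+1) (Es i) = 1"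
    and A_carrier: "A \<in> carrier_mat (d+1) (d+1)"
    and A_far: "\<And>i j. i \<le> d \<Longrightarrow> j \<le> d \<Longrightarrow> j > i + 1 \<or> i > j + 1 \<Longrightarrow> Es i * A * Es j = 0\<^sub>m (d+1) (d+1)"
    and A_near: "\<And>i j. i \<le> d \<Longrightarrow> j \<le> d \<Longrightarrow> j = i + 1 \<or> i = j + 1 \<Longrightarrow> Es i * A * Es j \<noteq> 0\<^sub>m (d+1) (d+1)"
    and th_distinct: "inj_on th {0..d}"
    and th_eig: "\<And>i. i \<le> d \<Longrightarrow> eigenvalue A (th i)"
    and P_carrier: "P \<in> carrier_mat (d+1) (d+1)"
    and P_basis: "invertible_mat P"
    and P_feasible: "\<And>i. i \<le> d \<Longrightarrow> \<exists>w \<in> carrier_vec (d+1). col P i = Es i *\<^sub>v w"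
    and B_carrier: "B \<in> carrier_mat (d+1) (d+1)"
    and B_repr: "A * P = P * B"
    and r: "r \<le> d" and s: "s \<le> d" and sr: "s \<noteq> r"
    and row_sum: "\<And>i. i \<le> d \<Longrightarrow> coef_c B i + coef_a B i + coef_b d B i = th r"
  shows "((Delta_adj d A th Es ths r s) \<and> (\<forall>t \<le> d. t \<noteq> s \<longrightarrow> \<not> Delta_adj d A th Es ths r t))
     \<longleftrightarrow>
     ((\<forall>i \<le> d. coef_c B i * ths (i - 1) + coef_a B i * ths i + coef_b d B i * ths (i + 1)
                 - th r * ths i
               = (th s - th r) * (ths i - mat_trace (prim_idem d A th r * dual_mat d Es ths)))
      \<and> \<not> (\<exists>c. dual_mat d Es ths = c \<cdot>\<^sub>m 1\<^sub>m (d+1)))"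
proof -
  let ?n = "Suc d"
  have Ac: "A \<in> carrier_mat ?n ?n" using A_carrier by simp
  have Pc: "P \<in> carrier_mat ?n ?n" using P_carrier by simp
  have Bc: "B \<in> carrier_mat ?n ?n" using B_carrier by simp
  obtain Q where Qc: "Q \<in> carrier_mat ?n ?n" and PQ: "P * Q = 1\<^sub>m ?n" and QP: "Q * P = 1\<^sub>m ?n"
    using get_inverse[OF Pc P_basis] by blast
  have Esc: "Es i \<in> carrier_mat ?n ?n" if "i \<le> d" for i using Es_carrier[OF that] by simp
  have Es_e: "Es i $$ (k,l) = P $$ (k,i) * Q $$ (i,l)" if i: "i \<le> d" and k: "k < ?n" and l: "l < ?n" for i k l
  proof -
    have EsP: "Es i * P = mat ?n ?n (\<lambda>(a,j). if j = i then P $$ (a,i) else 0)"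
    proof (rule eq_matI)
      fix a j assume a: "a < dim_row (mat ?n ?n (\<lambda>(a,j). if j = i then P $$ (a,i) else 0))"
        and j: "j < dim_col (mat ?n ?n (\<lambda>(a,j). if j = i then P $$ (a,i) else 0))"
      have a': "a < ?n" and j': "j \<le> d" using a j by auto
      obtain w where w: "w \<in> carrier_vec ?n" "col P j = Es j *\<^sub>v w" using P_feasible[OF j'] by auto
      have "(Es i * P) $$ (a,j) = (Es i *\<^sub>v col P j) $ a" using a' j' Esc[OF i] Pc by simp
      also have "\<dots> = ((Es i * Es j) *\<^sub>v w) $ a" using w Esc[OF i] Esc[OF j'] by simp
      also have "\<dots> = (if j = i then P $$ (a,i) else 0)"
      proof (cases "j = i")
        case True
        hence "((Es i * Es j) *\<^sub>v w) $ a = (col P j) $ a" using Es_orth[OF i j'] w by simp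
        thus ?thesis using True a' j' Pc by simp
      next
        case False
        hence "((Es i * Es j) *\<^sub>v w) $ a = (0\<^sub>m ?n ?n *\<^sub>v w) $ a" using Es_orth[OF i j'] by simp
        thus ?thesis using False a' w by (simp add: scalar_prod_def)
      qed
      finally show "(Es i * P) $$ (a,j) = mat ?n ?n (\<lambda>(a,j). if j = i then P $$ (a,i) else 0) $$ (a,j)"
        using a' j' by simp
    qed (use Esc[OF i] Pc in auto)
    have "Es i = Es i * (P * Q)" using PQ Esc[OF i] by simp
    also have "\<dots> = (Es i * P) * Q" using Esc[OF i] Pc Qc by simp
    finally have "Es i $$ (k,l) = (mat ?n ?n (\<lambda>(a,j). if j = i then P $$ (a,i) else 0) * Q) $$ (k,l)"
      using EsP by simp
    also have "\<dots> = (\<Sum>j = 0..<?n. (if j = i then P $$ (k,i) else 0) * Q $$ (j,l))"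
      using k l Qc by (simp add: scalar_prod_def row_def)
    also have "\<dots> = (\<Sum>j\<in>{0..<?n}. if j = i then P $$ (k,i) * Q $$ (i,l) else 0)" by (rule sum.cong) auto
    also have "\<dots> = P $$ (k,i) * Q $$ (i,l)" using i by (subst sum.delta) auto
    finally show ?thesis .
  qed
  have BQAP: "B = Q * A * P"
  proof -
    have "Q * A * P = Q * (A * P)" using Qc Ac Pc by simp
    also have "\<dots> = Q * (P * B)" using B_repr by simp
    also have "\<dots> = (Q * P) * B" using Qc Pc Bc by simp
    also have "\<dots> = B" using QP Bc by simp
    finally show ?thesis by simp
  qed
  have EAE: "Es i * A * Es j \<noteq> 0\<^sub>m ?n ?n \<longleftrightarrow> B $$ (i,j) \<noteq> 0" if i: "i \<le> d" and j: "j \<le> d" for i j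
  proof -
    have "(Es i * A * Es j) $$ (k,l) = P $$ (k,i) * (\<Sum>a=0..<?n. \<Sum>b=0..<?n. Q $$ (i,a) * A $$ (a,b) * P $$ (b,j)) * Q $$ (j,l)"
      if "k < ?n" "l < ?n" for k l
      by (rule rank1_mid[OF Esc[OF i] Ac Esc[OF j]]) (use Es_e i j that in auto)
    moreover have "(\<Sum>a=0..<?n. \<Sum>b=0..<?n. Q $$ (i,a) * A $$ (a,b) * P $$ (b,j)) = B $$ (i,j)"
      unfolding BQAP using mid_prod[OF Qc Ac Pc] i j by simp
    ultimately have e: "(Es i * A * Es j) $$ (k,l) = P $$ (k,i) * B $$ (i,j) * Q $$ (j,l)"
      if "k < ?n" "l < ?n" for k l using that by simp
    have c: "Es i * A * Es j \<in> carrier_mat ?n ?n" using Esc[OF i] Ac Esc[OF j] by simp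
    have "(\<exists>k<?n. \<exists>l<?n. (Es i * A * Es j) $$ (k,l) \<noteq> 0) = (\<exists>k<?n. \<exists>l<?n. P $$ (k,i) * B $$ (i,j) * Q $$ (j,l) \<noteq> 0)"
      using e by (simp cong: conj_cong)
    thus ?thesis unfolding mat_nz_iff[OF c] using nz_rank1[OF Qc Pc QP, of i j "B $$ (i,j)"] i j by simp
  qed
  have tri: "B $$ (i,j) = 0" if "i \<le> d" "j \<le> d" "j > i + 1 \<or> i > j + 1" for i j
    using EAE[of i j] A_far[of i j] that by auto
  have near1: "B $$ (i, Suc i) \<noteq> 0" if "i < d" for i
    using EAE[of i "Suc i"] A_near[of i "Suc i"] that by auto
  have near2: "B $$ (Suc i, i) \<noteq> 0" if "i < d" for i
    using EAE[of "Suc i" i] A_near[of "Suc i" i] that by auto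
  have rowsum: "(\<Sum>j=0..<?n. B $$ (i,j)) = th r" if i: "i \<le> d" for i
    using row_expand[OF tri i, of "\<lambda>_. 1"] row_sum[OF i] by simp
  define K :: "nat \<Rightarrow> 'a" where "K = rec_nat 1 (\<lambda>i k. k * B $$ (i, Suc i) / B $$ (Suc i, i))"
  have K0: "K 0 = 1" and KS: "K (Suc i) = K i * B $$ (i, Suc i) / B $$ (Suc i, i)" for i
    unfolding K_def by simp_all
  have Knz: "K i \<noteq> 0" if "i < ?n" for i
    using that proof (induction i)
    case 0 show ?case using K0 by simp
  next
    case (Suc i) thus ?case using KS[of i] near1[of i] near2[of i] by simp
  qed
  have Ksym: "B $$ (j,i) * K j = K i * B $$ (i,j)" if i: "i < ?n" and j: "j < ?n" for i j
  proof -
    consider "j = i" | "j = Suc i" | "i = Suc j" | "j > i + 1 \<or> i > j + 1" by linarith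
    thus ?thesis
    proof cases
      case 1 thus ?thesis by simp
    next
      case 2 thus ?thesis using KS[of i] near2[of i] j by (simp add: field_simps)
    next
      case 3 thus ?thesis using KS[of j] near2[of j] i by (simp add: field_simps)
    next
      case 4 thus ?thesis using tri[of i j] tri[of j i] i j by auto
    qed
  qed
  define u :: "nat \<Rightarrow> 'a vec" where
    "u t = (if t = r then vec (Suc d) (\<lambda>_. 1) else Q *\<^sub>v (SOME v. eigenvector A v (th t)))" for t
  have u_props: "u t \<in> carrier_vec ?n \<and> u t \<noteq> 0\<^sub>v ?n \<and> B *\<^sub>v u t = th t \<cdot>\<^sub>v u t" if t: "t \<le> d" for t
  proof (cases "t = r")
    case True
    have "B *\<^sub>v vec ?n (\<lambda>_. 1) = th r \<cdot>\<^sub>v vec ?n (\<lambda>_. 1)"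
    proof (rule eq_vecI)
      fix i assume "i < dim_vec (th r \<cdot>\<^sub>v vec ?n (\<lambda>_. 1))"
      hence i: "i < ?n" by simp
      have "(B *\<^sub>v vec ?n (\<lambda>_. 1)) $ i = (\<Sum>j=0..<?n. B $$ (i,j))"
        using Bc i by (simp add: scalar_prod_def row_def)
      thus "(B *\<^sub>v vec ?n (\<lambda>_. 1)) $ i = (th r \<cdot>\<^sub>v vec ?n (\<lambda>_. 1)) $ i" using rowsum[of i] i by simp
    qed (use Bc in auto)
    moreover have "vec ?n (\<lambda>_. 1) \<noteq> (0\<^sub>v ?n :: 'a vec)"
    proof
      assume "vec ?n (\<lambda>_. 1) = (0\<^sub>v ?n :: 'a vec)"
      hence "(vec ?n (\<lambda>_. 1) :: 'a vec) $ 0 = 0\<^sub>v ?n $ 0" by simp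
      thus False by simp
    qed
    ultimately show ?thesis using True unfolding u_def by simp
  next
    case False
    have "\<exists>v. eigenvector A v (th t)" using th_eig[OF t] unfolding eigenvalue_def .
    define v where "v = (SOME v. eigenvector A v (th t))"
    have ev: "eigenvector A v (th t)" unfolding v_def using \<open>\<exists>v. eigenvector A v (th t)\<close> by (rule someI_ex)
    have v: "v \<in> carrier_vec ?n" "v \<noteq> 0\<^sub>v ?n" "A *\<^sub>v v = th t \<cdot>\<^sub>v v"
      using ev Ac unfolding eigenvector_def by auto
    have ut: "u t = Q *\<^sub>v v" using False unfolding u_def v_def by simp
    have PQv: "P *\<^sub>v (Q *\<^sub>v v) = v" using Pc Qc v(1) PQ
      by (metis assoc_mult_mat_vec one_mult_mat_vec)
    have "B *\<^sub>v (Q *\<^sub>v v) = (Q * A * P) *\<^sub>v (Q *\<^sub>v v)" using BQAP by simp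
    also have "\<dots> = Q *\<^sub>v (A *\<^sub>v (P *\<^sub>v (Q *\<^sub>v v)))"
    proof -
      have x: "Q *\<^sub>v v \<in> carrier_vec ?n" using Qc v(1) by simp
      have AP: "A * P \<in> carrier_mat ?n ?n" using Ac Pc by simp
      have "Q * A * P = Q * (A * P)" using Qc Ac Pc by simp
      thus ?thesis using assoc_mult_mat_vec[OF Qc AP x] assoc_mult_mat_vec[OF Ac Pc x] by simp
    qed
    also have "\<dots> = Q *\<^sub>v (th t \<cdot>\<^sub>v v)" using PQv v(3) by simp
    also have "\<dots> = th t \<cdot>\<^sub>v (Q *\<^sub>v v)" using mult_mat_vec[OF Qc v(1)] .
    finally have e: "B *\<^sub>v (Q *\<^sub>v v) = th t \<cdot>\<^sub>v (Q *\<^sub>v v)" .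
    have nz: "Q *\<^sub>v v \<noteq> 0\<^sub>v ?n"
    proof
      assume "Q *\<^sub>v v = 0\<^sub>v ?n"
      hence "P *\<^sub>v (Q *\<^sub>v v) = 0\<^sub>v ?n" using Pc by (intro eq_vecI) (auto simp: scalar_prod_def)
      thus False using PQv v(2) by simp
    qed
    show ?thesis using ut e nz Qc v(1) by simp
  qed
  have th_inj: "inj_on th {0..d}" using th_distinct .
  obtain VB where VBc: "VB \<in> carrier_mat ?n ?n"
    and UVB: "mat ?n ?n (\<lambda>(i,t). u t $ i) * VB = 1\<^sub>m ?n"
    and VUB: "VB * mat ?n ?n (\<lambda>(i,t). u t $ i) = 1\<^sub>m ?n"
    using eig_decomp[OF Bc th_inj, of u] u_props by auto
  define UB where "UB = mat (Suc d) (Suc d) (\<lambda>(i,t). u t $ i)"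
  have UBc: "UB \<in> carrier_mat ?n ?n" unfolding UB_def by simp
  define uA where "uA t = P *\<^sub>v u t" for t
  define UA where "UA = mat (Suc d) (Suc d) (\<lambda>(i,t). uA t $ i)"
  define VA where "VA = VB * Q"
  have UAc: "UA \<in> carrier_mat ?n ?n" unfolding UA_def by simp
  have VAc: "VA \<in> carrier_mat ?n ?n" unfolding VA_def using VBc Qc by simp
  have UA_eq: "UA = P * UB"
  proof (rule eq_matI)
    fix i t assume i: "i < dim_row (P * UB)" and t: "t < dim_col (P * UB)"
    have "col UB t = u t" using t u_props[of t] UBc unfolding UB_def by (auto intro!: eq_vecI)
    thus "UA $$ (i,t) = (P * UB) $$ (i,t)" using i t Pc UBc unfolding UA_def uA_def by simp
  qed (use Pc UBc in \<open>auto simp: UA_def\<close>)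
  have UVA: "UA * VA = 1\<^sub>m ?n"
  proof -
    have "UA * VA = P * (UB * VB) * Q" unfolding UA_eq VA_def using assoc4[OF Pc UBc VBc Qc] .
    also have "\<dots> = 1\<^sub>m ?n" using UVB PQ Pc unfolding UB_def[symmetric] by simp
    finally show ?thesis .
  qed
  have VUA: "VA * UA = 1\<^sub>m ?n"
  proof -
    have "VA * UA = VB * (Q * P) * UB" unfolding UA_eq VA_def using assoc4[OF VBc Qc Pc UBc] .
    also have "\<dots> = 1\<^sub>m ?n" using VUB QP VBc UBc unfolding UB_def[symmetric] by simp
    finally show ?thesis .
  qed
  have uA_props: "uA t \<in> carrier_vec ?n \<and> A *\<^sub>v uA t = th t \<cdot>\<^sub>v uA t" if t: "t \<le> d" for t
  proof -
    have "A *\<^sub>v uA t = (A * P) *\<^sub>v u t" unfolding uA_def using Ac Pc u_props[OF t] by simp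
    also have "\<dots> = P *\<^sub>v (B *\<^sub>v u t)" unfolding B_repr using Pc Bc u_props[OF t] by simp
    also have "\<dots> = th t \<cdot>\<^sub>v uA t" unfolding uA_def using u_props[OF t] mult_mat_vec[OF Pc] by simp
    finally show ?thesis unfolding uA_def using Pc u_props[OF t] by simp
  qed
  have E_e: "prim_idem d A th t $$ (a,b) = UA $$ (a,t) * VA $$ (t,b)"
    if t: "t \<le> d" and a: "a < ?n" and b: "b < ?n" for t a b
    using eig_formula[OF Ac th_inj, of uA VA t a b] uA_props VAc UVA t a b unfolding UA_def by auto
  define Ast where "Ast = dual_mat d Es ths"
  define Dm where "Dm = mat (Suc d) (Suc d) (\<lambda>(a,b). if a = b then ths a else (0::'a))"
  have Astc: "Ast \<in> carrier_mat ?n ?n" unfolding Ast_def dual_mat_def by simp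
  have Dmc: "Dm \<in> carrier_mat ?n ?n" unfolding Dm_def by simp
  have Ast_e: "Ast $$ (k,l) = (\<Sum>a=0..<?n. P $$ (k,a) * ths a * Q $$ (a,l))" if k: "k < ?n" and l: "l < ?n" for k l
  proof -
    have "Ast $$ (k,l) = (\<Sum>i\<le>d. ths i * Es i $$ (k,l))" unfolding Ast_def dual_mat_def using k l by simp
    also have "\<dots> = (\<Sum>i\<le>d. P $$ (k,i) * ths i * Q $$ (i,l))"
      by (rule sum.cong) (use Es_e k l in auto)
    also have "\<dots> = (\<Sum>a=0..<?n. P $$ (k,a) * ths a * Q $$ (a,l))"
      by (simp add: atLeast0LessThan lessThan_Suc_atMost)
    finally show ?thesis .
  qed
  have Ast_eq: "Ast = P * Dm * Q"
  proof (rule eq_matI)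
    fix k l assume k: "k < dim_row (P * Dm * Q)" and l: "l < dim_col (P * Dm * Q)"
    hence k': "k < ?n" and l': "l < ?n" using Pc Qc by auto
    have "(P * Dm * Q) $$ (k,l) = (\<Sum>a=0..<?n. \<Sum>b=0..<?n. P $$ (k,a) * Dm $$ (a,b) * Q $$ (b,l))"
      by (rule mid_prod[OF Pc Dmc Qc k' l'])
    also have "\<dots> = (\<Sum>a=0..<?n. P $$ (k,a) * ths a * Q $$ (a,l))"
    proof (rule sum.cong[OF refl])
      fix a assume a: "a \<in> {0..<?n}"
      have "(\<Sum>b=0..<?n. P $$ (k,a) * Dm $$ (a,b) * Q $$ (b,l)) = (\<Sum>b\<in>{0..<?n}. if b = a then P $$ (k,a) * ths a * Q $$ (a,l) else 0)"
        by (rule sum.cong) (use a in \<open>auto simp: Dm_def\<close>)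
      also have "\<dots> = P $$ (k,a) * ths a * Q $$ (a,l)" using a by (subst sum.delta) auto
      finally show "(\<Sum>b=0..<?n. P $$ (k,a) * Dm $$ (a,b) * Q $$ (b,l)) = P $$ (k,a) * ths a * Q $$ (a,l)" .
    qed
    finally show "Ast $$ (k,l) = (P * Dm * Q) $$ (k,l)" using Ast_e[OF k' l'] by simp
  qed (use Astc Pc Qc in auto)
  have QAP: "Q * Ast * P = Dm"
  proof -
    have "Q * Ast * P = Q * P * Dm * (Q * P)" unfolding Ast_eq using sandwich[OF Qc Pc Dmc Qc Pc] by simp
    thus ?thesis using QP Dmc by simp
  qed
  have VAU: "VA * Ast * UA = VB * Dm * UB"
  proof -
    have "VA * Ast * UA = VB * (Q * Ast * P) * UB"
      unfolding VA_def UA_eq by (rule sandwich[OF VBc Qc Astc Pc UBc])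
    thus ?thesis using QAP by simp
  qed
  define Ub where "Ub i k = UB $$ (i,k)" for i k
  define Vb where "Vb i k = VB $$ (i,k)" for i k
  define Bm where "Bm i k = B $$ (i,k)" for i k
  have UB_e: "UB $$ (i,t) = u t $ i" if "i < ?n" "t < ?n" for i t using that unfolding UB_def by simp
  have H1: "(\<Sum>k=0..<?n. Ub i k * Vb k j) = (if i = j then 1 else 0)" if "i < ?n" "j < ?n" for i j
    unfolding Ub_def Vb_def by (rule one_entries[OF UBc VBc _ that]) (use UVB in \<open>simp add: UB_def\<close>)
  have H2: "(\<Sum>k=0..<?n. Vb i k * Ub k j) = (if i = j then 1 else 0)" if "i < ?n" "j < ?n" for i j
    unfolding Ub_def Vb_def by (rule one_entries[OF VBc UBc _ that]) (use VUB in \<open>simp add: UB_def\<close>)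
  have H3: "(\<Sum>m=0..<?n. Bm k m * Ub m a) = th a * Ub k a" if k: "k < ?n" and a: "a < ?n" for k a
  proof -
    have ua: "u a \<in> carrier_vec ?n" "B *\<^sub>v u a = th a \<cdot>\<^sub>v u a" using u_props[of a] a by auto
    have "(B *\<^sub>v u a) $ k = (\<Sum>m=0..<?n. Bm k m * Ub m a)"
      using Bc k ua(1) a by (simp add: scalar_prod_def row_def Bm_def Ub_def UB_e)
    thus ?thesis using ua k by (simp add: Ub_def UB_e a)
  qed
  have H4: "Ub k r = 1" if "k < ?n" for k using that r unfolding Ub_def by (simp add: UB_e u_def)
  have H5: "r < ?n" using r by simp
  have H6: "Bm j i * K j = K i * Bm i j" if "i < ?n" "j < ?n" for i j using Ksym that unfolding Bm_def by simp
  have H7: "K i \<noteq> 0" if "i < ?n" for i using Knz that by simp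
  have H8: "inj_on th {0..<?n}" using th_inj by (simp add: atLeastLessThanSuc_atLeastAtMost)
  let ?M = "MM ?n Ub Vb ths"
  have mid: "(\<Sum>a=0..<?n. \<Sum>b=0..<?n. VA $$ (t,a) * Ast $$ (a,b) * UA $$ (b,j)) = ?M t j"
    if t: "t < ?n" and j: "j < ?n" for t j
  proof -
    have "(\<Sum>a=0..<?n. \<Sum>b=0..<?n. VA $$ (t,a) * Ast $$ (a,b) * UA $$ (b,j)) = (VB * Dm * UB) $$ (t,j)"
      using mid_prod[OF VAc Astc UAc t j] VAU by simp
    also have "\<dots> = (\<Sum>a=0..<?n. \<Sum>b=0..<?n. VB $$ (t,a) * Dm $$ (a,b) * UB $$ (b,j))"
      by (rule mid_prod[OF VBc Dmc UBc t j])
    also have "\<dots> = (\<Sum>a=0..<?n. Vb t a * ths a * Ub a j)"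
    proof (rule sum.cong[OF refl])
      fix a assume a: "a \<in> {0..<?n}"
      have "(\<Sum>b=0..<?n. VB $$ (t,a) * Dm $$ (a,b) * UB $$ (b,j)) = (\<Sum>b\<in>{0..<?n}. if b = a then Vb t a * ths a * Ub a j else 0)"
        by (rule sum.cong) (use a in \<open>auto simp: Dm_def Vb_def Ub_def\<close>)
      also have "\<dots> = Vb t a * ths a * Ub a j" using a by (subst sum.delta) auto
      finally show "(\<Sum>b=0..<?n. VB $$ (t,a) * Dm $$ (a,b) * UB $$ (b,j)) = Vb t a * ths a * Ub a j" .
    qed
    also have "\<dots> = ?M t j" using MM_def[OF H1 H2 H3 H4 H5 H6 H7 H8] by simp
    finally show ?thesis .
  qed
  have Ec: "prim_idem d A th t \<in> carrier_mat ?n ?n" for t using prim_idem_carrier[OF Ac] .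
  have adj: "Delta_adj d A th Es ths r t \<longleftrightarrow> r \<noteq> t \<and> ?M r t \<noteq> 0" if t: "t \<le> d" for t
  proof -
    have e: "(prim_idem d A th r * Ast * prim_idem d A th t) $$ (k,l) = UA $$ (k,r) * ?M r t * VA $$ (t,l)"
      if "k < ?n" "l < ?n" for k l
    proof -
      have "(prim_idem d A th r * Ast * prim_idem d A th t) $$ (k,l)
         = UA $$ (k,r) * (\<Sum>a=0..<?n. \<Sum>b=0..<?n. VA $$ (r,a) * Ast $$ (a,b) * UA $$ (b,t)) * VA $$ (t,l)"
        by (rule rank1_mid[OF Ec Astc Ec]) (use E_e r t that in auto)
      thus ?thesis using mid[of r t] r t by simp
    qed
    have c: "prim_idem d A th r * Ast * prim_idem d A th t \<in> carrier_mat ?n ?n"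
      using mult_carrier_mat[OF mult_carrier_mat[OF Ec[of r] Astc] Ec[of t]] .
    have "(\<exists>k<?n. \<exists>l<?n. (prim_idem d A th r * Ast * prim_idem d A th t) $$ (k,l) \<noteq> 0)
        = (\<exists>k<?n. \<exists>l<?n. UA $$ (k,r) * ?M r t * VA $$ (t,l) \<noteq> 0)"
      using e by (simp cong: conj_cong)
    also have "\<dots> = (?M r t \<noteq> 0)" using nz_rank1[OF VAc UAc VUA, of r t "?M r t"] r t by simp
    finally show ?thesis unfolding Delta_adj_def Ast_def[symmetric] using mat_nz_iff[OF c] by simp
  qed
  have trace_eq: "mat_trace (prim_idem d A th r * Ast) = ?M r r"
  proof -
    have "mat_trace (prim_idem d A th r * Ast) = (\<Sum>a=0..<?n. \<Sum>b=0..<?n. VA $$ (r,a) * Ast $$ (a,b) * UA $$ (b,r))"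
      by (rule trace_rank1[OF Ec Astc]) (use E_e r in auto)
    thus ?thesis using mid[of r r] r by simp
  qed
  have scal: "(\<exists>c. Ast = c \<cdot>\<^sub>m 1\<^sub>m ?n) \<longleftrightarrow> (\<exists>c. \<forall>i<?n. ths i = c)"
  proof
    assume "\<exists>c. Ast = c \<cdot>\<^sub>m 1\<^sub>m ?n"
    then obtain c where c: "Ast = c \<cdot>\<^sub>m 1\<^sub>m ?n" by blast
    have "ths i = c" if i: "i < ?n" for i
    proof -
      have "ths i = Dm $$ (i,i)" using i by (simp add: Dm_def)
      also have "\<dots> = (\<Sum>a=0..<?n. \<Sum>b=0..<?n. Q $$ (i,a) * Ast $$ (a,b) * P $$ (b,i))"
        using mid_prod[OF Qc Astc Pc i i] QAP by simp
      also have "\<dots> = (\<Sum>a=0..<?n. c * (Q $$ (i,a) * P $$ (a,i)))"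
      proof (rule sum.cong[OF refl])
        fix a assume a: "a \<in> {0..<?n}"
        have "(\<Sum>b=0..<?n. Q $$ (i,a) * Ast $$ (a,b) * P $$ (b,i)) = (\<Sum>b\<in>{0..<?n}. if b = a then c * (Q $$ (i,a) * P $$ (a,i)) else 0)"
          by (rule sum.cong) (use a c in auto)
        also have "\<dots> = c * (Q $$ (i,a) * P $$ (a,i))" using a by (subst sum.delta) auto
        finally show "(\<Sum>b=0..<?n. Q $$ (i,a) * Ast $$ (a,b) * P $$ (b,i)) = c * (Q $$ (i,a) * P $$ (a,i))" .
      qed
      also have "\<dots> = c" using one_entries[OF Qc Pc QP i i] by (simp add: sum_distrib_left[symmetric])
      finally show ?thesis .
    qed
    thus "\<exists>c. \<forall>i<?n. ths i = c" by blast
  next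
    assume "\<exists>c. \<forall>i<?n. ths i = c"
    then obtain c where c: "\<And>i. i < ?n \<Longrightarrow> ths i = c" by blast
    have "Ast = c \<cdot>\<^sub>m 1\<^sub>m ?n"
    proof (rule eq_matI)
      fix k l assume k: "k < dim_row (c \<cdot>\<^sub>m 1\<^sub>m ?n)" and l: "l < dim_col (c \<cdot>\<^sub>m 1\<^sub>m ?n)"
      hence k': "k < ?n" and l': "l < ?n" by auto
      have "Ast $$ (k,l) = (\<Sum>a=0..<?n. c * (P $$ (k,a) * Q $$ (a,l)))"
        unfolding Ast_e[OF k' l'] by (rule sum.cong) (use c in \<open>auto simp: mult_ac\<close>)
      also have "\<dots> = c * (if k = l then 1 else 0)"
        using one_entries[OF Pc Qc PQ k' l'] by (simp add: sum_distrib_left[symmetric])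
      finally show "Ast $$ (k,l) = (c \<cdot>\<^sub>m 1\<^sub>m ?n) $$ (k,l)" using k' l' by simp
    qed (use Astc in auto)
    thus "\<exists>c. Ast = c \<cdot>\<^sub>m 1\<^sub>m ?n" by blast
  qed
  have s': "s < ?n" using s by simp
  note C2' = C2[OF H1 H2 H3 H4 H5 H6 H7 H8 s']
  have C3': "(?M a b = 0) = (?M b a = 0)" if "a < ?n" "b < ?n" for a b
    using C3[OF H1 H2 H3 H4 H5 H6 H7 H8 that] .
  have rowexp: "coef_c B i * ths (i - 1) + coef_a B i * ths i + coef_b d B i * ths (i + 1)
      = (\<Sum>j=0..<?n. Bm i j * ths j)" if "i \<le> d" for i
    using row_expand[OF tri that, of ths] unfolding Bm_def by simp
  have RHS_eq: "(\<forall>i \<le> d. coef_c B i * ths (i - 1) + coef_a B i * ths i + coef_b d B i * ths (i + 1)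
                 - th r * ths i
               = (th s - th r) * (ths i - mat_trace (prim_idem d A th r * dual_mat d Es ths)))
      \<longleftrightarrow> (\<forall>t<?n. t \<noteq> r \<longrightarrow> t \<noteq> s \<longrightarrow> ?M t r = 0)"
  proof -
    have "(\<forall>i \<le> d. coef_c B i * ths (i - 1) + coef_a B i * ths i + coef_b d B i * ths (i + 1)
                 - th r * ths i
               = (th s - th r) * (ths i - mat_trace (prim_idem d A th r * dual_mat d Es ths)))
       \<longleftrightarrow> (\<forall>i<?n. (\<Sum>j=0..<?n. Bm i j * ths j) - th r * ths i = (th s - th r) * (ths i - ?M r r))"
      using rowexp trace_eq unfolding Ast_def by (simp add: less_Suc_eq_le)
    thus ?thesis using C2' by simp
  qed
  have scal': "(\<exists>c. dual_mat d Es ths = c \<cdot>\<^sub>m 1\<^sub>m (d+1)) \<longleftrightarrow> (\<exists>c. \<forall>i<?n. ths i = c)"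
    using scal unfolding Ast_def by simp
  show ?thesis
  proof
    assume L: "Delta_adj d A th Es ths r s \<and> (\<forall>t \<le> d. t \<noteq> s \<longrightarrow> \<not> Delta_adj d A th Es ths r t)"
    hence Mrs: "?M r s \<noteq> 0" using adj[OF s] by simp
    have Mtr: "?M t r = 0" if t: "t < ?n" "t \<noteq> r" "t \<noteq> s" for t
    proof -
      have "\<not> Delta_adj d A th Es ths r t" using L t by simp
      hence "?M r t = 0" using adj[of t] t by simp
      thus ?thesis using C3'[of r t] t H5 by simp
    qed
    have ns: "\<not> (\<exists>c. dual_mat d Es ths = c \<cdot>\<^sub>m 1\<^sub>m (d+1))"
    proof
      assume "\<exists>c. dual_mat d Es ths = c \<cdot>\<^sub>m 1\<^sub>m (d+1)"
      then obtain c where c: "\<And>i. i < ?n \<Longrightarrow> ths i = c" using scal' by blast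
      have "?M r s = 0" using C4[OF H1 H2 H3 H4 H5 H6 H7 H8 c H5 s'] sr by simp
      thus False using Mrs by simp
    qed
    show "(\<forall>i \<le> d. coef_c B i * ths (i - 1) + coef_a B i * ths i + coef_b d B i * ths (i + 1)
                 - th r * ths i
               = (th s - th r) * (ths i - mat_trace (prim_idem d A th r * dual_mat d Es ths)))
      \<and> \<not> (\<exists>c. dual_mat d Es ths = c \<cdot>\<^sub>m 1\<^sub>m (d+1))"
      using RHS_eq Mtr ns by blast
  next
    assume R: "(\<forall>i \<le> d. coef_c B i * ths (i - 1) + coef_a B i * ths i + coef_b d B i * ths (i + 1)
                 - th r * ths i
               = (th s - th r) * (ths i - mat_trace (prim_idem d A th r * dual_mat d Es ths)))
      \<and> \<not> (\<exists>c. dual_mat d Es ths = c \<cdot>\<^sub>m 1\<^sub>m (d+1))"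
    have Mtr: "\<forall>t<?n. t \<noteq> r \<longrightarrow> t \<noteq> s \<longrightarrow> ?M t r = 0" using R RHS_eq by blast
    have Msr: "?M s r \<noteq> 0"
    proof
      assume z: "?M s r = 0"
      have all: "\<forall>t<?n. t \<noteq> r \<longrightarrow> ?M t r = 0" using Mtr z by blast
      have "\<forall>i<?n. ths i = ?M r r" using C5[OF H1 H2 H3 H4 H5 H6 H7 H8 all] by blast
      hence "\<exists>c. dual_mat d Es ths = c \<cdot>\<^sub>m 1\<^sub>m (d+1)" using scal' by blast
      thus False using R by blast
    qed
    have Mrs: "?M r s \<noteq> 0" using Msr C3'[OF H5 s'] by simp
    have "Delta_adj d A th Es ths r s" using adj[OF s] Mrs sr by simp
    moreover have "\<not> Delta_adj d A th Es ths r t" if t: "t \<le> d" "t \<noteq> s" for t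
    proof (cases "t = r")
      case True thus ?thesis using adj[OF t(1)] by simp
    next
      case False
      have "?M t r = 0" using Mtr t False by simp
      hence "?M r t = 0" using C3'[of r t] t H5 by simp
      thus ?thesis using adj[OF t(1)] by simp
    qed
    ultimately show "Delta_adj d A th Es ths r s \<and> (\<forall>t \<le> d. t \<noteq> s \<longrightarrow> \<not> Delta_adj d A th Es ths r t)"
      by blast
  qed
qed


end
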